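(* Under the good event $E$, the optimal policy $\pi^*$ satisfies $$\sum_{i\in[k]}P_{(\pi^*(0),i)}\mathbb{E}[R_i\mid\pi^*(i)]\le\sum_{i\in[k]}\widehat P_{(\pi^*(0),i)}\widehat{\mathcal{R}}_{(\pi^*(i),i)}+O\left(\sqrt{\max\left\{\widehat\lambda,\frac{m_0}{p_+}\right\}\frac{\log(NT)}{T}}\right),$$ where $\widehat\lambda=\|\widehat P\widehat M^{1/2}(\widehat P^\top\widehat f^* )^{\circ-1/2}\|_\infty^2$.
   Context: Two-stage causal MDP. Start state $0$, intermediate states $[k]$, terminal state. At each state $i\in\{0,\dots,k\}$: independent Bernoulli variables $X^i_1,\dots,X^i_n$, $q^i_j=\mathbb{P}\{X^i_j=1\}$ unknown; atomic interventions $\mathcal{I}_i=\{do()\}\cup\{do(X^i_j=0),do(X^i_j=1):j\in[n]\}$, $N=2n+1$ ($do(X^i_j=x)$ sets $X^i_j=x$, other variables drawn independently). Performing $a\in\mathcal{I}_0$ at state $0$ leads to $i\in[k]$ with unknown probability $P_{(a,i)}$ (depending stochastically on the realized $X^0$-values); $P\in\mathbb{R}^{N\times k}$, $p_+=\min\{P_{(a,i)}>0\}$. At state $i\in[k]$, after an intervention all $X^i_j$ and a reward $R_i\in\{0,1\}$ (law depending on the $X^i$-values) are observed; $\mathbb{E}[R_i\mid a]$ is the expected reward under $a\in\mathcal{I}_i$. A policy $\pi$ picks $\pi(0)\in\mathcal{I}_0$, $\pi(i)\in\mathcal{I}_i$; value $V(\pi)=\sum_iP_{(\pi(0),i)}\mathbb{E}[R_i\mid\pi(i)]$;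 $\pi^*$ maximizes $V$. Causal parameters: with $\bar q^i_j=\min(q^i_j,1-q^i_j)$ sorted as $\bar q^i_{(1)}\le\dots\le\bar q^i_{(n)}$, $m_i=\max\{j:\bar q^i_{(j)}<1/j\}$; $\mathcal{I}_{m_i}$ is the set of interventions setting a variable with $\bar q^i_{(j)}<1/j$ to its less likely value; $M=\mathrm{diag}(m_1,\dots,m_k)$. Frequency vectors: $f\in\mathbb{R}^N$, $f\ge0$, $\sum f_a=1$; $x^{\circ-1/2}$ is entrywise $x_i^{-1/2}$. Algorithm ALG-CE with budget $T$ (estimates are empirical frequencies/means). Phase 1 ($T/3$ rounds): $T/6$ rounds of $do()$ at state $0$, giving estimates of $q^0_j$, $\widehat m_0$, $\mathcal{I}_{m_0}$, and $\widehat P_{(a,i)}$ for $a\notin\mathcal{I}_{m_0}$ (frequency of reaching $i$ among rounds whose $X^0$-values agree with $a$); then each $a\in\mathcal{I}_{m_0}$ is performed $T/(6|\mathcal{I}_{m_0}|)$ times to get $\widehat P_{(a,i)}$. Phase 2: $\tilde f\in\arg\max_f\min_i(\widehat P^\top f)_i$. Phase 3 ($T/3$ rounds): each $a\in\mathcal{I}_0$ performed $\frac12(\tilde f(a)+\frac1N)\frac T3$ times with $do()$ at the reached state, giving $\widehat m_i$, $\widehat M=\mathrm{diag}(\widehat m_1,\dots,\widehat m_k)$. Phase 4: $\widehat f^*\in\arg\min_f\|\widehat P\widehat M^{1/2}(\widehat P^\top f)^{\circ-1/2}\|_\infty$. Phase 5 ($T/3$ rounds): with $h(a)=\frac13(\widehat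 f^*(a)+\tilde f(a)+\frac1N)$, each $a$ performed $h(a)T/6$ times with $do()$ at the reached state (estimating $\mathcal{I}_{m_i}$ and $\widehat{\mathcal{R}}_{(b,i)}$ for $b\notin\mathcal{I}_{m_i}$ from rounds whose $X^i$-values agree with $b$), then $h(a)T/6$ times with round-robin over $b\in\mathcal{I}_{m_i}$ at the reached state $i$ (estimating $\widehat{\mathcal{R}}_{(b,i)}$ for $b\in\mathcal{I}_{m_i}$). Output $\widehat\pi(i)\in\arg\max_b\widehat{\mathcal{R}}_{(b,i)}$, $\widehat\pi(0)\in\arg\max_a\sum_i\widehat P_{(a,i)}\widehat{\mathcal{R}}_{(\widehat\pi(i),i)}$. Good event $E=E_1\cap\dots\cap E_5$: ($E_1$) for every $a\in\mathcal{I}_0$, the transition estimates formed in each of Phases 1, 3, 5 satisfy $\sum_i|\widehat P_{(a,i)}-P_{(a,i)}|\le p_+/3$; ($E_2$) $\widehat m_0\in[\frac23m_0,2m_0]$; ($E_3$) $\widehat m_i\in[\frac23m_i,2m_i]$ for all $i\in[k]$ (for the estimates in Phases 3 and 5); ($E_4$) for all $a\in\mathcal{I}_0$, the Phase 1 estimates satisfy $\sum_i|\widehat P_{(a,i)}-P_{(a,i)}|\le\eta'$ with $\eta'=\sqrt{\frac{150m_0}{Tp_+}\log\frac{3T}{k}}$; ($E_5$) $|\mathbb{E}[R_i\mid a]-\widehat{\mathcal{R}}_{(a,i)}|\le\widehat\eta_i$ for all $i\in[k]$, $a\in\mathcal{I}_i$, with $\widehat\eta_i=\sqrt{\frac{27\widehat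 m_i}{T(\widehat P^\top\widehat f^* )_i}\log(2TN)}$. Here $\widehat P$ and $\widehat M$ denote the Phase 1 and Phase 3 estimates. *)

theory Defs
  imports Complex_Main
begin

text \<open>Atomic interventions at a state: Obs is do(), Do j b is do(X_j = b).\<close>
datatype interv = Obs | Do nat bool

definition acts :: "nat \<Rightarrow> interv set" where
  "acts n = insert Obs {Do j b | j b. j \<in> {1..n}}"

definition qbar_sorted :: "nat \<Rightarrow> (nat \<Rightarrow> real) \<Rightarrow> real list" where
  "qbar_sorted n q = sort (map (\<lambda>j. min (q j) (1 - q j)) [1..<n+1])"

definition causal_m :: "nat \<Rightarrow> (nat \<Rightarrow> real) \<Rightarrow> nat" where
  "causal_m n q = Max {j \<in> {1..n}. qbar_sorted n q ! (j - 1) < 1 / real j}"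

definition p_plus :: "nat \<Rightarrow> nat \<Rightarrow> (interv \<Rightarrow> nat \<Rightarrow> real) \<Rightarrow> real" where
  "p_plus n k P = Min {P a i | a i. a \<in> acts n \<and> i \<in> {1..k} \<and> P a i > 0}"

definition is_freq :: "nat \<Rightarrow> (interv \<Rightarrow> real) \<Rightarrow> bool" where
  "is_freq n f \<longleftrightarrow> (\<forall>a\<in>acts n. 0 \<le> f a) \<and> (\<Sum>a\<in>acts n. f a) = 1"

definition PTf :: "nat \<Rightarrow> (interv \<Rightarrow> nat \<Rightarrow> real) \<Rightarrow> (interv \<Rightarrow> real) \<Rightarrow> nat \<Rightarrow> real" where
  "PTf n P f i = (\<Sum>a\<in>acts n. P a i * f a)"

text \<open>x^{-1/2}; only ever evaluated where x > 0 or where it is multiplied by 0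
  (convention 0 * infinity = 0).\<close>
definition inv_sqrt :: "real \<Rightarrow> real" where
  "inv_sqrt x = (if x > 0 then 1 / sqrt x else 0)"

definition lam_norm :: "nat \<Rightarrow> nat \<Rightarrow> (interv \<Rightarrow> nat \<Rightarrow> real) \<Rightarrow> (nat \<Rightarrow> nat)
    \<Rightarrow> (interv \<Rightarrow> real) \<Rightarrow> real" where
  "lam_norm n k P mh f =
     Max ((\<lambda>a. \<bar>\<Sum>i=1..k. P a i * sqrt (real (mh i)) * inv_sqrt (PTf n P f i)\<bar>) ` acts n)"

text \<open>Frequency vectors for which the objective is finite (all others give +infinity).\<close>
definition feasible_f :: "nat \<Rightarrow> nat \<Rightarrow> (interv \<Rightarrow> nat \<Rightarrow> real) \<Rightarrow> (interv \<Rightarrow> real) \<Rightarrow> bool" where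
  "feasible_f n k P f \<longleftrightarrow> is_freq n f \<and>
     (\<forall>i\<in>{1..k}. (\<exists>a\<in>acts n. P a i \<noteq> 0) \<longrightarrow> PTf n P f i > 0)"

definition is_policy :: "nat \<Rightarrow> nat \<Rightarrow> interv \<Rightarrow> (nat \<Rightarrow> interv) \<Rightarrow> bool" where
  "is_policy n k a0 pol \<longleftrightarrow> a0 \<in> acts n \<and> (\<forall>i\<in>{1..k}. pol i \<in> acts n)"

definition pol_value :: "nat \<Rightarrow> (interv \<Rightarrow> nat \<Rightarrow> real) \<Rightarrow> (nat \<Rightarrow> interv \<Rightarrow> real)
    \<Rightarrow> interv \<Rightarrow> (nat \<Rightarrow> interv) \<Rightarrow> real" where
  "pol_value k P r a0 pol = (\<Sum>i=1..k. P a0 i * r i (pol i))"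

definition is_optimal :: "nat \<Rightarrow> nat \<Rightarrow> (interv \<Rightarrow> nat \<Rightarrow> real) \<Rightarrow> (nat \<Rightarrow> interv \<Rightarrow> real)
    \<Rightarrow> interv \<Rightarrow> (nat \<Rightarrow> interv) \<Rightarrow> bool" where
  "is_optimal n k P r a0 pol \<longleftrightarrow> is_policy n k a0 pol \<and>
     (\<forall>b0 pol'. is_policy n k b0 pol' \<longrightarrow> pol_value k P r b0 pol' \<le> pol_value k P r a0 pol)"

end

theory Submission
  imports Defs
begin


lemma termB:
  fixes T :: nat and L lamn :: real
  assumes T: "T > 0" and L: "L \<ge> 0"
    and fin: "finite (acts n)" and a0: "a0 \<in> acts n"
    and P1nn: "\<forall>i\<in>{1..k}. 0 \<le> P1 a0 i"
    and feas: "\<forall>i\<in>{1..k}. (\<exists>a\<in>acts n. P1 a i \<noteq> 0) \<longrightarrow> PTf n P1 f i > 0"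
    and E5: "\<forall>i\<in>{1..k}. PTf n P1 f i > 0 \<longrightarrow>
          \<bar>R i (pol i) - Rh (pol i) i\<bar> \<le> sqrt (27 * real (mh3 i) / (real T * PTf n P1 f i) * L)"
  shows "(\<Sum>i=1..k. P1 a0 i * (R i (pol i) - Rh (pol i) i))
         \<le> sqrt (27 * L / real T) * lam_norm n k P1 mh3 f"
proof -
  define g where "g i = P1 a0 i * sqrt (real (mh3 i)) * inv_sqrt (PTf n P1 f i)" for i
  have each: "P1 a0 i * (R i (pol i) - Rh (pol i) i) \<le> sqrt (27 * L / real T) * g i"
    if i: "i \<in> {1..k}" for i
  proof (cases "PTf n P1 f i > 0")
    case True
    let ?p = "PTf n P1 f i"
    have "sqrt (27 * real (mh3 i) / (real T * ?p) * L)
        = sqrt (27 * L / real T) * (sqrt (real (mh3 i)) * inv_sqrt ?p)"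
      using True T by (simp add: inv_sqrt_def real_sqrt_mult real_sqrt_divide field_simps)
    moreover have "P1 a0 i * (R i (pol i) - Rh (pol i) i) \<le> P1 a0 i * \<bar>R i (pol i) - Rh (pol i) i\<bar>"
      using P1nn i by (intro mult_left_mono) auto
    moreover have "P1 a0 i * \<bar>R i (pol i) - Rh (pol i) i\<bar>
        \<le> P1 a0 i * sqrt (27 * real (mh3 i) / (real T * ?p) * L)"
      using P1nn i E5 True by (intro mult_left_mono) auto
    ultimately show ?thesis unfolding g_def by (simp add: algebra_simps)
  next
    case False
    then have "P1 a0 i = 0" using feas i a0 by auto
    then show ?thesis using False by (simp add: g_def inv_sqrt_def)
  qed
  have "(\<Sum>i=1..k. P1 a0 i * (R i (pol i) - Rh (pol i) i)) \<le> (\<Sum>i=1..k. sqrt (27 * L / real T) * g i)"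
    by (rule sum_mono) (use each in auto)
  also have "\<dots> = sqrt (27 * L / real T) * (\<Sum>i=1..k. g i)" by (simp add: sum_distrib_left)
  also have "\<dots> \<le> sqrt (27 * L / real T) * lam_norm n k P1 mh3 f"
  proof (rule mult_left_mono)
    have "(\<Sum>i=1..k. g i) \<le> \<bar>\<Sum>i=1..k. g i\<bar>" by simp
    also have "\<dots> \<le> lam_norm n k P1 mh3 f"
      unfolding lam_norm_def g_def using fin a0 by (intro Max_ge) auto
    finally show "(\<Sum>i=1..k. g i) \<le> lam_norm n k P1 mh3 f" .
  qed (use L T in auto)
  finally show ?thesis .
qed

lemma lam_norm_nn:
  assumes "finite (acts n)" "a0 \<in> acts n"
  shows "0 \<le> lam_norm n k P1 mh3 f"
proof -
  have "\<bar>\<Sum>i=1..k. P1 a0 i * sqrt (real (mh3 i)) * inv_sqrt (PTf n P1 f i)\<bar> \<le> lam_norm n k P1 mh3 f"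
    unfolding lam_norm_def using assms by (intro Max_ge) auto
  then show ?thesis by linarith
qed

lemma finite_acts: "finite (acts n)"
proof -
  have "{Do j b | j b. j \<in> {1..n}} = (\<lambda>(j,b). Do j b) ` ({1..n} \<times> UNIV)" by auto
  then show ?thesis unfolding acts_def by simp
qed

lemma sqrt_scale: "0 \<le> X \<Longrightarrow> c \<le> d\<^sup>2 \<Longrightarrow> 0 \<le> d \<Longrightarrow> sqrt (c * X) \<le> d * sqrt X"
proof -
  assume h: "0 \<le> X" "c \<le> d\<^sup>2" "0 \<le> d"
  have "sqrt (c * X) \<le> sqrt (d\<^sup>2 * X)" using h by (intro real_sqrt_le_mono mult_right_mono) auto
  also have "\<dots> = d * sqrt X" using h by (simp add: real_sqrt_mult)
  finally show ?thesis .
qed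

lemma main_bound:
  fixes n k T :: nat and q :: "nat \<Rightarrow> nat \<Rightarrow> real" and P P1 :: "interv \<Rightarrow> nat \<Rightarrow> real"
    and R :: "nat \<Rightarrow> interv \<Rightarrow> real" and Rh :: "interv \<Rightarrow> nat \<Rightarrow> real" and mh3 :: "nat \<Rightarrow> nat"
  assumes n1: "n \<ge> 1" and k1: "k \<ge> 1" and T0: "T > 0"
    and Pst: "\<forall>a\<in>acts n. (\<forall>i\<in>{1..k}. 0 \<le> P a i) \<and> (\<Sum>i=1..k. P a i) = 1"
    and Rb: "\<forall>i\<in>{1..k}. \<forall>b\<in>acts n. 0 \<le> R i b \<and> R i b \<le> 1"
    and P1b: "\<forall>a\<in>acts n. \<forall>i\<in>{1..k}. 0 \<le> P1 a i \<and> P1 a i \<le> 1"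
    and feas: "feasible_f n k P1 fstar"
    and opt: "is_optimal n k P R a0 pol"
    and E4: "\<forall>a\<in>acts n. (\<Sum>i=1..k. \<bar>P1 a i - P a i\<bar>)
          \<le> sqrt (150 * real (causal_m n (q 0)) / (real T * p_plus n k P) * ln (3 * real T / real k))"
    and E5: "\<forall>i\<in>{1..k}. PTf n P1 fstar i > 0 \<longrightarrow> (\<forall>b\<in>acts n.
          \<bar>R i b - Rh b i\<bar> \<le> sqrt (27 * real (mh3 i) / (real T * PTf n P1 fstar i)
                                     * ln (2 * real T * real (2 * n + 1))))"
  shows "pol_value k P R a0 pol
        \<le> pol_value k P1 (\<lambda>i b. Rh b i) a0 pol
           + 21 * sqrt (max ((lam_norm n k P1 mh3 fstar)\<^sup>2) (real (causal_m n (q 0)) / p_plus n k P) * ln (real (2 * n + 1) * real T) / real T)"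
proof -
  define N where "N = 2 * n + 1"
  define m0 where "m0 = causal_m n (q 0)"
  define pp where "pp = p_plus n k P"
  define ln0 where "ln0 = lam_norm n k P1 mh3 fstar"
  define L where "L = ln (2 * real T * real N)"
  note E4 = E4[folded m0_def pp_def]
  note E5 = E5[folded N_def, folded L_def]
  have a0: "a0 \<in> acts n" and polin: "\<forall>i\<in>{1..k}. pol i \<in> acts n"
    using opt unfolding is_optimal_def is_policy_def by auto
  have fin: "finite (acts n)" by (rule finite_acts)
  have N3: "real N \<ge> 3" using n1 unfolding N_def by simp
  have T1: "real T \<ge> 1" using T0 by simp
  have NT: "real N * real T \<ge> 3" using mult_mono[OF N3 T1] by simp
  have lnNT: "ln (real N * real T) > 0" using NT by simp
  have pp0: "pp > 0"
  proof -
    let ?S = "{P a i | a i. a \<in> acts n \<and> i \<in> {1..k} \<and> P a i > 0}"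
    have Sfin: "finite ?S"
    proof -
      have "?S \<subseteq> (\<lambda>(a,i). P a i) ` (acts n \<times> {1..k})" by auto
      then show ?thesis using fin by (meson finite_SigmaI finite_atLeastAtMost finite_imageI finite_subset)
    qed
    have "\<exists>i\<in>{1..k}. P a0 i > 0"
    proof (rule ccontr)
      assume "\<not> ?thesis"
      then have "\<forall>i\<in>{1..k}. P a0 i \<le> 0" by auto
      then have "(\<Sum>i=1..k. P a0 i) \<le> 0" by (intro sum_nonpos) auto
      then show False using Pst a0 by auto
    qed
    then have Sne: "?S \<noteq> {}" using a0 by blast
    have "\<forall>x\<in>?S. x > 0" by auto
    then show ?thesis unfolding pp_def p_plus_def using Sfin Sne by simp
  qed
  define X where "X = max (ln0\<^sup>2) (real m0 / pp) * ln (real N * real T) / real T"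
  have X0: "X \<ge> 0" unfolding X_def using pp0 lnNT T1 by (intro divide_nonneg_pos mult_nonneg_nonneg) (auto simp: le_max_iff_disj)
  have A1: "(\<Sum>i=1..k. (P a0 i - P1 a0 i) * R i (pol i)) \<le> (\<Sum>i=1..k. \<bar>P1 a0 i - P a0 i\<bar>)"
  proof (rule sum_mono)
    fix i assume i: "i \<in> {1..k}"
    have "0 \<le> R i (pol i)" "R i (pol i) \<le> 1" using Rb polin i by auto
    then have "(P a0 i - P1 a0 i) * R i (pol i) \<le> \<bar>P a0 i - P1 a0 i\<bar> * R i (pol i)"
      by (intro mult_right_mono) auto
    also have "\<dots> \<le> \<bar>P a0 i - P1 a0 i\<bar>" using \<open>R i (pol i) \<le> 1\<close> by (simp add: mult_left_le)
    finally show "(P a0 i - P1 a0 i) * R i (pol i) \<le> \<bar>P1 a0 i - P a0 i\<bar>" by simp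
  qed
  have argA: "150 * real m0 / (real T * pp) * ln (3 * real T / real k) \<le> 150 * X"
  proof (cases "ln (3 * real T / real k) \<ge> 0")
    case True
    have "ln (3 * real T / real k) \<le> ln (real N * real T)"
    proof -
      have "3 * real T / real k \<le> 3 * real T" using k1 T1 by (simp add: divide_le_eq)
      also have "\<dots> \<le> real N * real T" using N3 T1 by simp
      finally show ?thesis using T1 k1 NT by (subst ln_le_cancel_iff) auto
    qed
    moreover have "real m0 / pp \<le> max (ln0\<^sup>2) (real m0 / pp)" by simp
    ultimately have "real m0 / pp * ln (3 * real T / real k) \<le> max (ln0\<^sup>2) (real m0 / pp) * ln (real N * real T)"
      using True pp0 by (intro mult_mono) (auto simp: le_max_iff_disj)
    then have "150 * (real m0 / pp * ln (3 * real T / real k)) / real T \<le> 150 * (max (ln0\<^sup>2) (real m0 / pp) * ln (real N * real T)) / real T"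
      using T1 by (intro divide_right_mono) auto
    then show ?thesis unfolding X_def by (simp add: field_simps)
  next
    case False
    have "150 * real m0 / (real T * pp) \<ge> 0" using pp0 T1 by simp
    then have "150 * real m0 / (real T * pp) * ln (3 * real T / real k) \<le> 0"
      using False by (intro mult_nonneg_nonpos) auto
    then show ?thesis using X0 by linarith
  qed
  have A: "(\<Sum>i=1..k. (P a0 i - P1 a0 i) * R i (pol i)) \<le> 13 * sqrt X"
  proof -
    have "(\<Sum>i=1..k. (P a0 i - P1 a0 i) * R i (pol i)) \<le> sqrt (150 * real m0 / (real T * pp) * ln (3 * real T / real k))"
      using A1 E4 a0 by fastforce
    also have "\<dots> \<le> sqrt (150 * X)" using argA by simp
    also have "\<dots> \<le> 13 * sqrt X" using X0 by (intro sqrt_scale) auto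
    finally show ?thesis .
  qed
  have L0: "L \<ge> 0"
  proof -
    have "1 \<le> 2 * real T * real N" using mult_mono[OF N3 T1] by (simp add: mult.commute)
    then have "0 \<le> ln (2 * real T * real N)" by simp
    then show ?thesis unfolding L_def .
  qed
  have B1: "(\<Sum>i=1..k. P1 a0 i * (R i (pol i) - Rh (pol i) i)) \<le> sqrt (27 * L / real T) * ln0"
    unfolding ln0_def
  proof (rule termB[OF T0 L0 fin a0])
    show "\<forall>i\<in>{1..k}. 0 \<le> P1 a0 i" using P1b a0 by auto
    show "\<forall>i\<in>{1..k}. (\<exists>a\<in>acts n. P1 a i \<noteq> 0) \<longrightarrow> 0 < PTf n P1 fstar i"
      using feas unfolding feasible_f_def by auto
    show "\<forall>i\<in>{1..k}. 0 < PTf n P1 fstar i \<longrightarrow>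
        \<bar>R i (pol i) - Rh (pol i) i\<bar> \<le> sqrt (27 * real (mh3 i) / (real T * PTf n P1 fstar i) * L)"
      using E5 polin by auto
  qed
  have ln0nn: "ln0 \<ge> 0" unfolding ln0_def by (rule lam_norm_nn[OF fin a0])
  have Lle: "L \<le> 2 * ln (real N * real T)"
  proof -
    have "2 * (real N * real T) \<le> (real N * real T) * (real N * real T)" using NT
      by (intro mult_right_mono) auto
    then have "2 * real T * real N \<le> (real N * real T)^2"
      by (simp add: power2_eq_square mult.commute mult.left_commute)
    then have "L \<le> ln ((real N * real T)^2)" unfolding L_def using T1 N3
      by (subst ln_le_cancel_iff) auto
    also have "\<dots> = 2 * ln (real N * real T)" using NT by (simp add: ln_realpow)
    finally show ?thesis .
  qed
  have B: "(\<Sum>i=1..k. P1 a0 i * (R i (pol i) - Rh (pol i) i)) \<le> 8 * sqrt X"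
  proof -
    have "sqrt (27 * L / real T) * ln0 = sqrt (27 * L / real T * ln0\<^sup>2)"
      using ln0nn by (simp only: real_sqrt_mult real_sqrt_abs abs_of_nonneg)
    also have "\<dots> \<le> sqrt (54 * X)"
    proof (rule real_sqrt_le_mono)
      have "27 * L * ln0\<^sup>2 \<le> 27 * (2 * ln (real N * real T)) * max (ln0\<^sup>2) (real m0 / pp)"
        using Lle L0 lnNT by (intro mult_mono) (auto simp: le_max_iff_disj)
      then have "27 * L * ln0\<^sup>2 / real T \<le> 27 * (2 * ln (real N * real T)) * max (ln0\<^sup>2) (real m0 / pp) / real T"
        using T1 by (intro divide_right_mono) auto
      then show "27 * L / real T * ln0\<^sup>2 \<le> 54 * X" unfolding X_def by (simp add: field_simps)
    qed
    also have "\<dots> \<le> 8 * sqrt X" using X0 by (intro sqrt_scale) auto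
    finally show ?thesis using B1 by linarith
  qed
  have split: "pol_value k P R a0 pol - pol_value k P1 (\<lambda>i b. Rh b i) a0 pol
      = (\<Sum>i=1..k. (P a0 i - P1 a0 i) * R i (pol i)) + (\<Sum>i=1..k. P1 a0 i * (R i (pol i) - Rh (pol i) i))"
    unfolding pol_value_def sum.distrib[symmetric] sum_subtractf[symmetric]
    by (rule sum.cong) (simp_all add: algebra_simps)
  have X0': "sqrt X \<ge> 0" using X0 by simp
  show ?thesis
    using split A B X0' unfolding X_def N_def[symmetric] m0_def[symmetric]
      pp_def[symmetric] ln0_def[symmetric] by linarith
qed

theorem lemma1:
  shows "\<exists>C>0. \<forall>(n::nat) (k::nat) (T::nat) (q::nat \<Rightarrow> nat \<Rightarrow> real)
      (P::interv \<Rightarrow> nat \<Rightarrow> real) (R::nat \<Rightarrow> interv \<Rightarrow> real)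
      (P1::interv \<Rightarrow> nat \<Rightarrow> real) (P3::interv \<Rightarrow> nat \<Rightarrow> real) (P5::interv \<Rightarrow> nat \<Rightarrow> real)
      (mh0::nat) (mh3::nat \<Rightarrow> nat) (mh5::nat \<Rightarrow> nat) (Rh::interv \<Rightarrow> nat \<Rightarrow> real)
      (fstar::interv \<Rightarrow> real) (a0::interv) (pol::nat \<Rightarrow> interv).
    let N = 2 * n + 1; m = (\<lambda>i. causal_m n (q i)); pp = p_plus n k P;
        lam = (lam_norm n k P1 mh3 fstar)\<^sup>2 in
    ( n \<ge> 1 \<and> k \<ge> 1 \<and> T > 0
    \<and> (\<forall>i\<in>{0..k}. \<forall>j\<in>{1..n}. 0 \<le> q i j \<and> q i j \<le> 1)
    \<and> (\<forall>a\<in>acts n. (\<forall>i\<in>{1..k}. 0 \<le> P a i) \<and> (\<Sum>i=1..k. P a i) = 1)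
    \<and> (\<forall>i\<in>{1..k}. \<forall>b\<in>acts n. 0 \<le> R i b \<and> R i b \<le> 1)
    \<and> (\<forall>Pe\<in>{P1, P3, P5}. \<forall>a\<in>acts n. \<forall>i\<in>{1..k}. 0 \<le> Pe a i \<and> Pe a i \<le> 1)
    \<and> (\<forall>i\<in>{1..k}. \<forall>b\<in>acts n. 0 \<le> Rh b i \<and> Rh b i \<le> 1)
    \<and> feasible_f n k P1 fstar
    \<and> (\<forall>f. feasible_f n k P1 f \<longrightarrow> lam_norm n k P1 mh3 fstar \<le> lam_norm n k P1 mh3 f)
    \<and> is_optimal n k P R a0 pol
    \<comment> \<open>E1\<close>
    \<and> (\<forall>Pe\<in>{P1, P3, P5}. \<forall>a\<in>acts n. (\<Sum>i=1..k. \<bar>Pe a i - P a i\<bar>) \<le> pp / 3)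
    \<comment> \<open>E2\<close>
    \<and> 2/3 * real (m 0) \<le> real mh0 \<and> real mh0 \<le> 2 * real (m 0)
    \<comment> \<open>E3\<close>
    \<and> (\<forall>mh\<in>{mh3, mh5}. \<forall>i\<in>{1..k}. 2/3 * real (m i) \<le> real (mh i) \<and> real (mh i) \<le> 2 * real (m i))
    \<comment> \<open>E4\<close>
    \<and> (\<forall>a\<in>acts n. (\<Sum>i=1..k. \<bar>P1 a i - P a i\<bar>)
          \<le> sqrt (150 * real (m 0) / (real T * pp) * ln (3 * real T / real k)))
    \<comment> \<open>E5 (vacuous where (P1^T fstar)_i = 0, i.e. where the radius is infinite)\<close>
    \<and> (\<forall>i\<in>{1..k}. PTf n P1 fstar i > 0 \<longrightarrow> (\<forall>b\<in>acts n.
          \<bar>R i b - Rh b i\<bar> \<le> sqrt (27 * real (mh3 i) / (real T * PTf n P1 fstar i)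
                                     * ln (2 * real T * real N))))
    \<longrightarrow> pol_value k P R a0 pol
        \<le> pol_value k P1 (\<lambda>i b. Rh b i) a0 pol
           + C * sqrt (max lam (real (m 0) / pp) * ln (real N * real T) / real T))"
  apply (rule exI[of _ 21])
  apply (simp only: Let_def)
  apply (intro conjI allI impI)
   apply simp
  apply (elim conjE)
  apply (rule main_bound)
           apply assumption+
        apply blast
       apply assumption+
  done

end
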